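(* Let $a>0$, $\alpha\in[0,1)$ and $f\in\mathcal C_a$. Then $s_\alpha=(1-\alpha)^{-1}F_\alpha(x_\alpha^+)<a$.
   Context: $\mathcal C_a$ is the set of $C^1$ functions $f:\mathbb R\to\mathbb R$ that are even, satisfy $f(s)=|s|$ for $|s|\ge a$ and are strictly convex on $[-a,a]$. For $f\in\mathcal C_a$: $F_\alpha(s)=f(s)-\alpha s$, $x_\alpha^+=(f')^{-1}(\alpha)\in[0,a)$ (inverse of $f':[-a,a]\to[-1,1]$); $F_\alpha$ decreases on $(-\infty,x_\alpha^+]$ and increases on $[x_\alpha^+,\infty)$. Let $F_\alpha^{-1}$ be the inverse of $F_\alpha|_{[x_\alpha^+,\infty)}$, $\phi=F_\alpha^{-1}\circ F_\alpha$, $\delta_x=(1-\alpha)^{-1}F_\alpha(x)-\phi(x)$ and $s_\alpha=x_\alpha^++\delta_{x_\alpha^+}$. *)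

theory Defs
  imports "HOL-Analysis.Analysis"
begin

definition strictly_convex_on :: "real set \<Rightarrow> (real \<Rightarrow> real) \<Rightarrow> bool" where
  "strictly_convex_on S f \<longleftrightarrow>
     (\<forall>x\<in>S. \<forall>y\<in>S. \<forall>t::real. x \<noteq> y \<and> 0 < t \<and> t < 1 \<longrightarrow>
        f ((1 - t) * x + t * y) < (1 - t) * f x + t * f y)"

definition class_C :: "real \<Rightarrow> (real \<Rightarrow> real) set" where
  "class_C a = {f. (\<forall>x. f differentiable (at x)) \<and> continuous_on UNIV (deriv f)
       \<and> (\<forall>s. f (- s) = f s)
       \<and> (\<forall>s. a \<le> \<bar>s\<bar> \<longrightarrow> f s = \<bar>s\<bar>)
       \<and> strictly_convex_on {-a..a} f}"

definition F_alpha :: "(real \<Rightarrow> real) \<Rightarrow> real \<Rightarrow> real \<Rightarrow> real" where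
  "F_alpha f \<alpha> s = f s - \<alpha> * s"

definition x_plus :: "real \<Rightarrow> (real \<Rightarrow> real) \<Rightarrow> real \<Rightarrow> real" where
  "x_plus a f \<alpha> = (THE x. x \<in> {-a..a} \<and> deriv f x = \<alpha>)"

definition F_alpha_inv :: "real \<Rightarrow> (real \<Rightarrow> real) \<Rightarrow> real \<Rightarrow> real \<Rightarrow> real" where
  "F_alpha_inv a f \<alpha> t = (THE y. x_plus a f \<alpha> \<le> y \<and> F_alpha f \<alpha> y = t)"

definition phi :: "real \<Rightarrow> (real \<Rightarrow> real) \<Rightarrow> real \<Rightarrow> real \<Rightarrow> real" where
  "phi a f \<alpha> x = F_alpha_inv a f \<alpha> (F_alpha f \<alpha> x)"

definition delta :: "real \<Rightarrow> (real \<Rightarrow> real) \<Rightarrow> real \<Rightarrow> real \<Rightarrow> real" where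
  "delta a f \<alpha> x = F_alpha f \<alpha> x / (1 - \<alpha>) - phi a f \<alpha> x"

definition s_alpha :: "real \<Rightarrow> (real \<Rightarrow> real) \<Rightarrow> real \<Rightarrow> real" where
  "s_alpha a f \<alpha> = x_plus a f \<alpha> + delta a f \<alpha> (x_plus a f \<alpha>)"

end

theory Submission
  imports Defs
begin

lemma diff_quot_lim:
  assumes "(f has_real_derivative D) (at x)"
  shows "((\<lambda>t. (f (x + t*w) - f x)/t) \<longlongrightarrow> D*w) (at_right 0)"
proof -
  have "((\<lambda>t. x + t*w) has_real_derivative w) (at 0)"
    by (auto intro!: derivative_eq_intros)
  moreover have "(f has_real_derivative D) (at (x + 0*w))" using assms by simp
  ultimately have "((\<lambda>t. f (x + t*w)) has_real_derivative D*w) (at 0)"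
    using DERIV_chain2[of f D "\<lambda>t. x+t*w" 0 w UNIV] by simp
  hence "((\<lambda>t. (f (x + (0+t)*w) - f (x + 0*w))/t) \<longlongrightarrow> D*w) (at 0)"
    unfolding DERIV_def by simp
  hence "((\<lambda>t. (f (x + t*w) - f x)/t) \<longlongrightarrow> D*w) (at 0)" by simp
  thus ?thesis by (rule filterlim_mono) (auto simp: at_le)
qed

lemma tangent_le:
  assumes "(f has_real_derivative D) (at x)"
    and "\<And>t. 0 < t \<Longrightarrow> t < 1 \<Longrightarrow> f (x + t*(z-x)) \<le> (1-t)*f x + t*f z"
  shows "D*(z-x) \<le> f z - f x"
proof -
  have lim: "((\<lambda>t. (f (x + t*(z-x)) - f x)/t) \<longlongrightarrow> D*(z-x)) (at_right 0)"
    by (rule diff_quot_lim[OF assms(1)])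
  have ev: "\<forall>\<^sub>F t in at_right 0. (f (x + t*(z-x)) - f x)/t \<le> f z - f x"
  proof -
    have "\<forall>\<^sub>F t in at_right (0::real). 0 < t \<and> t < 1"
      by (simp add: eventually_at_right_less eventually_conj eventually_at_right_field)
         (metis eventually_at_right_field zero_less_one)
    thus ?thesis
    proof (rule eventually_mono)
      fix t :: real assume t: "0 < t \<and> t < 1"
      have "f (x + t*(z-x)) - f x \<le> t*(f z - f x)" using assms(2)[of t] t by (simp add: algebra_simps)
      thus "(f (x + t*(z-x)) - f x)/t \<le> f z - f x" using t by (simp add: divide_le_eq mult.commute)
    qed
  qed
  show ?thesis by (rule tendsto_le[OF _ tendsto_const lim ev]) simp
qed

theorem corollary3p15:
  fixes a \<alpha> :: real and f :: "real \<Rightarrow> real"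
  assumes "a > 0" and "0 \<le> \<alpha>" and "\<alpha> < 1" and "f \<in> class_C a"
  shows "s_alpha a f \<alpha> = F_alpha f \<alpha> (x_plus a f \<alpha>) / (1 - \<alpha>)
         \<and> s_alpha a f \<alpha> < a"
proof -
  have diff: "\<And>x. f differentiable (at x)" and cont: "continuous_on UNIV (deriv f)"
    and absf: "\<And>s. a \<le> \<bar>s\<bar> \<Longrightarrow> f s = \<bar>s\<bar>" and sc: "strictly_convex_on {-a..a} f"
    using assms(4) unfolding class_C_def by auto
  have Dv: "\<And>y. (f has_real_derivative deriv f y) (at y)"
    using diff DERIV_deriv_iff_real_differentiable by blast
  have da: "deriv f a = 1"
  proof -
    have l1: "((\<lambda>t. (f (a + t*1) - f a)/t) \<longlongrightarrow> deriv f a * 1) (at_right 0)"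
      by (rule diff_quot_lim[OF Dv])
    have ev: "\<forall>\<^sub>F t in at_right (0::real). (f (a + t*1) - f a)/t = 1"
      unfolding eventually_at_right_field
    proof (intro exI[of _ 1] conjI allI impI)
      fix t :: real assume "0 < t" "t < 1"
      then show "(f (a + t*1) - f a)/t = 1" using absf[of "a+t"] absf[of a] assms(1) by simp
    qed simp
    have "((\<lambda>t. (f (a + t*1) - f a)/t) \<longlongrightarrow> 1) (at_right (0::real))"
      using tendsto_eventually[OF ev] .
    from tendsto_unique[OF _ l1 this] show ?thesis by simp
  qed
  have dma: "deriv f (-a) = -1"
  proof -
    have l1: "((\<lambda>t. (f (-a + t*(-1)) - f (-a))/t) \<longlongrightarrow> deriv f (-a) * (-1)) (at_right 0)"
      by (rule diff_quot_lim[OF Dv])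
    have ev: "\<forall>\<^sub>F t in at_right (0::real). (f (-a + t*(-1)) - f (-a))/t = 1"
      unfolding eventually_at_right_field
    proof (intro exI[of _ 1] conjI allI impI)
      fix t :: real assume "0 < t" "t < 1"
      then show "(f (-a + t*(-1)) - f (-a))/t = 1" using absf[of "-a-t"] absf[of "-a"] assms(1) by simp
    qed simp
    have "((\<lambda>t. (f (-a + t*(-1)) - f (-a))/t) \<longlongrightarrow> 1) (at_right (0::real))"
      using tendsto_eventually[OF ev] .
    from tendsto_unique[OF _ l1 this] show ?thesis by simp
  qed
  have stan: "f y > f x + deriv f x * (y - x)"
    if x: "x \<in> {-a..a}" and y: "y \<in> {-a..a}" and xy: "x \<noteq> y" for x y
  proof -
    define m where "m = (x + y)/2"
    have m: "m \<in> {-a..a}" "m \<noteq> x" using x y xy unfolding m_def by auto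
    have "f ((1 - 1/2) * x + (1/2) * y) < (1 - 1/2) * f x + (1/2) * f y"
      using sc x y xy unfolding strictly_convex_on_def by (metis field_sum_of_halves half_gt_zero less_add_same_cancel1 zero_less_one)
    hence fm: "f m < (f x + f y)/2" unfolding m_def by (simp add: field_simps)
    have "deriv f x * (m - x) \<le> f m - f x"
    proof (rule tangent_le[OF Dv])
      fix t :: real assume t: "0 < t" "t < 1"
      have "f ((1 - t) * x + t * m) < (1 - t) * f x + t * f m"
        using sc x m t unfolding strictly_convex_on_def by metis
      moreover have "(1 - t) * x + t * m = x + t*(m-x)" by (simp add: algebra_simps)
      ultimately show "f (x + t*(m-x)) \<le> (1-t)*f x + t*f m" by simp
    qed
    moreover have "deriv f x * (y - x) = 2*(deriv f x * (m - x))" unfolding m_def by (simp add: algebra_simps)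
    ultimately show ?thesis using fm by (auto simp: field_simps)
  qed
  obtain x where x: "x \<in> {-a..a}" "deriv f x = \<alpha>"
    using IVT'[of "deriv f" "-a" \<alpha> a] dma da assms(1,2,3) continuous_on_subset[OF cont]
    by fastforce
  have uniq: "y = x" if "y \<in> {-a..a} \<and> deriv f y = \<alpha>" for y
  proof (rule ccontr)
    assume "y \<noteq> x"
    then have "f y > f x + \<alpha> * (y - x)" "f x > f y + \<alpha> * (x - y)"
      using stan[of x y] stan[of y x] x that by auto
    then show False by (simp add: algebra_simps)
  qed
  have xp: "x_plus a f \<alpha> = x"
    unfolding x_plus_def by (rule the_equality) (use x uniq in auto)
  have xa: "x < a" using x da assms(3) by (cases "x = a") auto
  have Fincr: "F_alpha f \<alpha> y > F_alpha f \<alpha> x" if "y > x" for y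
  proof (cases "y \<le> a")
    case True
    then show ?thesis using stan[of x y] x that unfolding F_alpha_def by (auto simp: algebra_simps)
  next
    case False
    have "f a > f x + \<alpha> * (a - x)" using stan[of x a] x xa assms(1) by auto
    moreover have "f y = y" "f a = a" using absf[of y] absf[of a] False assms(1) by auto
    moreover have "\<alpha> * (y - a) < y - a" using False assms(3) by simp
    ultimately show ?thesis unfolding F_alpha_def by (simp add: algebra_simps)
  qed
  have ph: "phi a f \<alpha> x = x"
    unfolding phi_def F_alpha_inv_def xp
  proof (rule the_equality)
    fix y assume "x \<le> y \<and> F_alpha f \<alpha> y = F_alpha f \<alpha> x"
    then show "y = x" using Fincr[of y] by force
  qed simp
  have s: "s_alpha a f \<alpha> = F_alpha f \<alpha> x / (1 - \<alpha>)"
    unfolding s_alpha_def delta_def xp ph by simp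
  have "F_alpha f \<alpha> x < F_alpha f \<alpha> a" using Fincr xa by blast
  also have "F_alpha f \<alpha> a = a * (1 - \<alpha>)" using absf[of a] assms(1) unfolding F_alpha_def by (simp add: algebra_simps)
  finally have "F_alpha f \<alpha> x / (1 - \<alpha>) < a" using assms(3) by (simp add: pos_divide_less_eq)
  then show ?thesis using s xp by simp
qed

end
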